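(* Let $f,g$ satisfy (H1) and (H2) (see context). Let $(\gamma_n)_{n\ge1}$ be positive non-increasing stepsizes with $\gamma_n\in(0,1/L]$, $\theta_0\in\mathrm{Dom}(g)$, and $\theta_{n+1}=\mathrm{Prox}_{\gamma_{n+1}}(\theta_n-\gamma_{n+1}H_{n+1})$ with $H_{n+1}$ $\Theta$-valued random variables. Let $\eta_{n+1}=H_{n+1}-\nabla f(\theta_n)$, $\mathcal F_n=\sigma(\theta_0,H_1,\dots,H_n)$, $\epsilon^{(1)}_n=\|\mathbb E[\eta_{n+1}\mid\mathcal F_n]\|$, $\epsilon^{(2)}_n=\mathbb E[\|\eta_{n+1}\|^2\mid\mathcal F_n]$. Let $(a_n)_{n\ge1}$ be non-negative with $A_n=\sum_{k=1}^na_k$, and assume $(a_n/\gamma_n)_{n\ge1}$ is non-decreasing and there is a constant $B$ with $\mathbb P(\sup_n\|\theta_n\|\le B)=1$. Then for any minimizer $\theta_\star$ of $F$, with $B_\star=B+\|\theta_\star\|$, $$\frac1{A_n}\sum_{k=1}^na_k\mathbb E[F(\theta_k)]-F(\theta_\star)\le\frac{B_\star^2a_n}{2\gamma_nA_n}+\frac1{A_n}\sum_{k=1}^na_k\big\{B_\star\mathbb E[\epsilon^{(1)}_{k-1}]+\gamma_k\mathbb E[\epsilon^{(2)}_{k-1}]\big\}.$$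
   Context: $\Theta$ is a finite-dimensional Euclidean space with norm $\|\cdot\|$. (H1): $g:\Theta\to(-\infty,+\infty]$ convex, not identically $+\infty$, lower semicontinuous; $f:\Theta\to\mathbb R$ continuously differentiable with $L$-Lipschitz gradient. (H2): $f$ convex and $\mathrm{argmin}_\Theta F\ne\emptyset$, $F=f+g$. $\mathrm{Dom}(g)=\{\theta:|g(\theta)|<\infty\}$; $\mathrm{Prox}_\gamma(\theta)=\mathrm{argmin}_{\vartheta}\{g(\vartheta)+\frac1{2\gamma}\|\vartheta-\theta\|^2\}$. *)

theory Defs
  imports "HOL-Analysis.Analysis" "HOL-Probability.Probability"
begin

definition ereal_convex :: "('a::real_vector \<Rightarrow> ereal) \<Rightarrow> bool" where
  "ereal_convex g \<longleftrightarrow> (\<forall>x y u. 0 \<le> u \<and> u \<le> 1 \<longrightarrow>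
      g ((1 - u) *\<^sub>R x + u *\<^sub>R y) \<le> ereal (1 - u) * g x + ereal u * g y)"

definition lsc :: "('a::topological_space \<Rightarrow> ereal) \<Rightarrow> bool" where
  "lsc g \<longleftrightarrow> (\<forall>c. closed {x. g x \<le> c})"

definition Dom :: "('a \<Rightarrow> ereal) \<Rightarrow> 'a set" where
  "Dom g = {x. \<bar>g x\<bar> < \<infinity>}"

definition Prox :: "('a::real_normed_vector \<Rightarrow> ereal) \<Rightarrow> real \<Rightarrow> 'a \<Rightarrow> 'a set" where
  "Prox g \<gamma> x = {v. \<forall>w. g v + ereal (norm (v - x)^2 / (2 * \<gamma>)) \<le> g w + ereal (norm (w - x)^2 / (2 * \<gamma>))}"

definition nat_filtration ::
  "'b measure \<Rightarrow> ('b \<Rightarrow> 'a::topological_space) \<Rightarrow> (nat \<Rightarrow> 'b \<Rightarrow> 'a) \<Rightarrow> nat \<Rightarrow> 'b measure" where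
  "nat_filtration M X0 H n = sigma (space M)
     ({X0 -` A \<inter> space M | A. A \<in> sets borel} \<union>
      (\<Union>i\<in>{1..n}. {H i -` A \<inter> space M | A. A \<in> sets borel}))"

definition vcond_exp ::
  "'b measure \<Rightarrow> 'b measure \<Rightarrow> ('b \<Rightarrow> 'a::euclidean_space) \<Rightarrow> 'b \<Rightarrow> 'a" where
  "vcond_exp M F X = (\<lambda>\<omega>. \<Sum>b\<in>Basis. real_cond_exp M F (\<lambda>\<omega>'. X \<omega>' \<bullet> b) \<omega> *\<^sub>R b)"

definition ereal_expectation :: "'b measure \<Rightarrow> ('b \<Rightarrow> ereal) \<Rightarrow> ereal" where
  "ereal_expectation M X =
     enn2ereal (\<integral>\<^sup>+\<omega>. e2ennreal (X \<omega>) \<partial>M) - enn2ereal (\<integral>\<^sup>+\<omega>. e2ennreal (- X \<omega>) \<partial>M)"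

end

theory Submission
  imports Defs
begin

lemma line_deriv:
  fixes f :: "'a::euclidean_space \<Rightarrow> real"
  assumes fd: "\<forall>x. (f has_derivative (\<lambda>h. gradf x \<bullet> h)) (at x)"
  shows "((\<lambda>t. f (x + t *\<^sub>R d)) has_real_derivative (gradf (x + t *\<^sub>R d) \<bullet> d)) (at t)"
proof -
  have l: "((\<lambda>t::real. x + t *\<^sub>R d) has_derivative (\<lambda>s. s *\<^sub>R d)) (at t)"
    by (auto intro!: derivative_eq_intros)
  have "((\<lambda>t. f (x + t *\<^sub>R d)) has_derivative (\<lambda>s. gradf (x + t *\<^sub>R d) \<bullet> (s *\<^sub>R d))) (at t)"
    using has_derivative_compose[OF l fd[rule_format, of "x + t *\<^sub>R d"]] by (simp add: o_def)
  then show ?thesis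
    unfolding has_field_derivative_def by (rule has_derivative_eq_rhs) (auto simp: fun_eq_iff)
qed

lemma grad_ineq:
  fixes f :: "'a::euclidean_space \<Rightarrow> real"
  assumes cf: "convex_on UNIV f"
    and fd: "\<forall>x. (f has_derivative (\<lambda>h. gradf x \<bullet> h)) (at x)"
  shows "f x + gradf x \<bullet> (y - x) \<le> f y"
proof -
  define \<phi> where "\<phi> t = f (x + t *\<^sub>R (y - x))" for t :: real
  have "convex_on UNIV \<phi>"
  proof (rule convex_onI)
    fix t s u :: real assume "0 < t" "t < 1"
    have "\<phi> ((1 - t) *\<^sub>R s + t *\<^sub>R u) = f ((1 - t) *\<^sub>R (x + s *\<^sub>R (y - x)) + t *\<^sub>R (x + u *\<^sub>R (y - x)))"
      unfolding \<phi>_def by (simp add: algebra_simps)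
    also have "\<dots> \<le> (1 - t) * \<phi> s + t * \<phi> u"
      unfolding \<phi>_def using convex_onD[OF cf, of t] \<open>0 < t\<close> \<open>t < 1\<close> by simp
    finally show "\<phi> ((1 - t) *\<^sub>R s + t *\<^sub>R u) \<le> (1 - t) * \<phi> s + t * \<phi> u" .
  qed simp
  moreover have "(\<phi> has_field_derivative (gradf x \<bullet> (y - x))) (at 0 within UNIV)"
    unfolding \<phi>_def using line_deriv[OF fd, of x "y - x" 0] by simp
  ultimately have "\<phi> 1 - \<phi> 0 \<ge> (gradf x \<bullet> (y - x)) * (1 - 0)"
    by (intro convex_on_imp_above_tangent[where A=UNIV]) auto
  then show ?thesis unfolding \<phi>_def by simp
qed

lemma descent:
  fixes f :: "'a::euclidean_space \<Rightarrow> real"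
  assumes fd: "\<forall>x. (f has_derivative (\<lambda>h. gradf x \<bullet> h)) (at x)"
    and lip: "\<forall>x y. norm (gradf x - gradf y) \<le> L * norm (x - y)"
  shows "f y \<le> f x + gradf x \<bullet> (y - x) + L / 2 * (norm (y - x))\<^sup>2"
proof -
  define d where "d = y - x"
  define \<psi> where "\<psi> t = f (x + t *\<^sub>R d) - t * (gradf x \<bullet> d) - L / 2 * t\<^sup>2 * (norm d)\<^sup>2" for t :: real
  define \<psi>' where "\<psi>' t = gradf (x + t *\<^sub>R d) \<bullet> d - gradf x \<bullet> d - L * t * (norm d)\<^sup>2" for t :: real
  have der: "DERIV \<psi> t :> \<psi>' t" for t
    unfolding \<psi>_def \<psi>'_def
    by (rule derivative_eq_intros line_deriv[OF fd] refl | simp)+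
  obtain z where z: "0 < z" "z < 1" "\<psi> 1 - \<psi> 0 = (1 - 0) * \<psi>' z"
    using MVT2[of 0 1 \<psi> \<psi>'] der by auto
  have "gradf (x + z *\<^sub>R d) \<bullet> d - gradf x \<bullet> d = (gradf (x + z *\<^sub>R d) - gradf x) \<bullet> d"
    by (simp add: inner_diff_left)
  also have "\<dots> \<le> norm (gradf (x + z *\<^sub>R d) - gradf x) * norm d"
    by (rule norm_cauchy_schwarz)
  also have "\<dots> \<le> L * norm (z *\<^sub>R d) * norm d"
    using lip[rule_format, of "x + z *\<^sub>R d" x] by (intro mult_right_mono) auto
  also have "\<dots> = L * z * (norm d)\<^sup>2" using z by (simp add: power2_eq_square)
  finally have "\<psi>' z \<le> 0" unfolding \<psi>'_def by simp
  then have "\<psi> 1 \<le> \<psi> 0" using z by simp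
  then show ?thesis unfolding \<psi>_def d_def by simp
qed

lemma eps_lemma:
  fixes a b c :: real
  assumes "\<And>t. 0 < t \<Longrightarrow> t \<le> 1 \<Longrightarrow> a \<le> b + t * c" and "0 \<le> c"
  shows "a \<le> b"
proof (rule ccontr)
  assume "\<not> a \<le> b"
  define t where "t = min 1 ((a - b) / (2 * (c + 1)))"
  have t: "0 < t" "t \<le> 1" "t \<le> (a - b) / (2 * (c + 1))"
    using \<open>\<not> a \<le> b\<close> \<open>0 \<le> c\<close> by (auto simp: t_def)
  have "t * c \<le> (a - b) / (2 * (c + 1)) * c" using t \<open>0 \<le> c\<close> by (intro mult_right_mono) auto
  also have "\<dots> = (a - b) * (c / (2 * (c + 1)))" by simp
  also have "\<dots> < (a - b) * 1"
    using \<open>\<not> a \<le> b\<close> \<open>0 \<le> c\<close> by (intro mult_strict_left_mono) auto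
  also have "\<dots> = a - b" by simp
  finally show False using assms(1)[OF t(1,2)] by simp
qed

lemma norm_add_sq: "(norm (a + t *\<^sub>R b))\<^sup>2 = (norm a)\<^sup>2 + 2 * t * (a \<bullet> b) + t\<^sup>2 * (norm b)\<^sup>2"
  for a b :: "'a::real_inner"
  unfolding power2_norm_eq_inner by (simp add: inner_add_left inner_add_right algebra_simps power2_eq_square inner_commute)

lemma norm_diff_sq: "(norm (a - b))\<^sup>2 = (norm a)\<^sup>2 - 2 * (a \<bullet> b) + (norm b)\<^sup>2"
  for a b :: "'a::real_inner"
  by (simp add: power2_norm_eq_inner inner_diff_left inner_diff_right algebra_simps inner_commute)

locale gprops =
  fixes g :: "'a::euclidean_space \<Rightarrow> ereal"
  assumes g_proper: "\<exists>x. g x \<noteq> \<infinity>" and g_not_minf: "\<forall>x. g x \<noteq> -\<infinity>"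
    and g_convex: "ereal_convex g"
begin

lemma prox_fin:
  assumes "0 < \<gamma>" "v \<in> Prox g \<gamma> z"
  shows "g v = ereal (real_of_ereal (g v))"
proof -
  obtain w where w: "g w \<noteq> \<infinity>" using g_proper by auto
  have "g v + ereal (norm (v - z)^2 / (2 * \<gamma>)) \<le> g w + ereal (norm (w - z)^2 / (2 * \<gamma>))"
    using assms(2) unfolding Prox_def by auto
  moreover have "g w + ereal (norm (w - z)^2 / (2 * \<gamma>)) < \<infinity>" using w g_not_minf by (cases "g w") auto
  ultimately have "g v \<noteq> \<infinity>" by auto
  then show ?thesis using g_not_minf by (cases "g v") auto
qed

lemma prox_sub:
  assumes "0 < \<gamma>" "v \<in> Prox g \<gamma> z" "g w \<noteq> \<infinity>"
  shows "real_of_ereal (g v) + (z - v) \<bullet> (w - v) / \<gamma> \<le> real_of_ereal (g w)"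
proof -
  define gv where "gv = real_of_ereal (g v)"
  define gw where "gw = real_of_ereal (g w)"
  have gv: "g v = ereal gv" using prox_fin[OF assms(1,2)] gv_def by simp
  have gw: "g w = ereal gw" using assms(3) g_not_minf gw_def by (cases "g w") auto
  have key: "gv \<le> gw + (v - z) \<bullet> (w - v) / \<gamma> + t * ((norm (w - v))\<^sup>2 / (2 * \<gamma>))"
    if t: "0 < t" "t \<le> 1" for t
  proof -
    define wt where "wt = (1 - t) *\<^sub>R v + t *\<^sub>R w"
    have "g wt \<le> ereal (1 - t) * g v + ereal t * g w"
      using g_convex t unfolding ereal_convex_def wt_def by auto
    also have "\<dots> = ereal ((1 - t) * gv + t * gw)" by (simp add: gv gw)
    finally have gwt: "g wt \<le> ereal ((1 - t) * gv + t * gw)" .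
    have "g v + ereal (norm (v - z)^2 / (2 * \<gamma>)) \<le> g wt + ereal (norm (wt - z)^2 / (2 * \<gamma>))"
      using assms(2) unfolding Prox_def by auto
    also have "\<dots> \<le> ereal ((1 - t) * gv + t * gw) + ereal (norm (wt - z)^2 / (2 * \<gamma>))"
      using gwt by (rule add_right_mono)
    finally have "gv + norm (v - z)^2 / (2 * \<gamma>) \<le> (1 - t) * gv + t * gw + norm (wt - z)^2 / (2 * \<gamma>)"
      by (simp add: gv)
    moreover have "wt - z = (v - z) + t *\<^sub>R (w - v)" unfolding wt_def by (simp add: algebra_simps)
    ultimately have "gv + norm (v - z)^2 / (2 * \<gamma>) \<le> (1 - t) * gv + t * gw +
        ((norm (v - z))\<^sup>2 + 2 * t * ((v - z) \<bullet> (w - v)) + t\<^sup>2 * (norm (w - v))\<^sup>2) / (2 * \<gamma>)"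
      using norm_add_sq by metis
    then have "t * gv \<le> t * (gw + (v - z) \<bullet> (w - v) / \<gamma> + t * ((norm (w - v))\<^sup>2 / (2 * \<gamma>)))"
      using assms(1) by (simp add: field_simps power2_eq_square)
    then show ?thesis using t
      by (simp add: mult_le_cancel_left_pos)
  qed
  have "gv \<le> gw + (v - z) \<bullet> (w - v) / \<gamma>"
    by (rule eps_lemma[OF key]) (use assms(1) in auto)
  moreover have "(z - v) \<bullet> (w - v) = - ((v - z) \<bullet> (w - v))" by (metis inner_minus_left minus_diff_eq)
  ultimately show ?thesis unfolding gv_def[symmetric] gw_def[symmetric]
    by simp
qed

lemma three_point:
  assumes "0 < \<gamma>" "v \<in> Prox g \<gamma> z" "g w \<noteq> \<infinity>"
  shows "real_of_ereal (g v) + (norm (v - z))\<^sup>2 / (2 * \<gamma>) + (norm (w - v))\<^sup>2 / (2 * \<gamma>)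
        \<le> real_of_ereal (g w) + (norm (w - z))\<^sup>2 / (2 * \<gamma>)"
proof -
  have s: "real_of_ereal (g v) + (z - v) \<bullet> (w - v) / \<gamma> \<le> real_of_ereal (g w)"
    by (rule prox_sub[OF assms])
  have e: "w - z = (w - v) + (v - z)" by simp
  have "(norm (w - z))\<^sup>2 = (norm (w - v))\<^sup>2 + 2 * ((w - v) \<bullet> (v - z)) + (norm (v - z))\<^sup>2"
    using norm_add_sq[of "w - v" 1 "v - z"] by simp
  moreover have "(w - v) \<bullet> (v - z) = - ((z - v) \<bullet> (w - v))"
    by (simp add: inner_commute inner_diff_left inner_diff_right)
  ultimately have "(norm (w - z))\<^sup>2 = (norm (w - v))\<^sup>2 + (norm (v - z))\<^sup>2 - 2 * ((z - v) \<bullet> (w - v))"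
    by simp
  then have "(norm (w - z))\<^sup>2 / (2 * \<gamma>) = (norm (w - v))\<^sup>2 / (2 * \<gamma>) + (norm (v - z))\<^sup>2 / (2 * \<gamma>) - (z - v) \<bullet> (w - v) / \<gamma>"
    by (simp add: add_divide_distrib diff_divide_distrib)
  then show ?thesis using s by linarith
qed

lemma prox_unique:
  assumes "0 < \<gamma>" "v1 \<in> Prox g \<gamma> z" "v2 \<in> Prox g \<gamma> z"
  shows "v1 = v2"
proof -
  have f2: "g v2 \<noteq> \<infinity>" using prox_fin[OF assms(1,3)] by (metis ereal_infty_less(1) less_ereal.simps(1) PInfty_neq_ereal(1))
  have "g v1 + ereal (norm (v1 - z)^2 / (2 * \<gamma>)) \<le> g v2 + ereal (norm (v2 - z)^2 / (2 * \<gamma>))"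
    "g v2 + ereal (norm (v2 - z)^2 / (2 * \<gamma>)) \<le> g v1 + ereal (norm (v1 - z)^2 / (2 * \<gamma>))"
    using assms(2,3) unfolding Prox_def by auto
  then have "real_of_ereal (g v2) + norm (v2 - z)^2 / (2 * \<gamma>) \<le> real_of_ereal (g v1) + norm (v1 - z)^2 / (2 * \<gamma>)"
    using prox_fin[OF assms(1,2)] prox_fin[OF assms(1,3)] by (metis plus_ereal.simps(1) ereal_less_eq(3))
  moreover have "real_of_ereal (g v1) + (norm (v1 - z))\<^sup>2 / (2 * \<gamma>) + (norm (v2 - v1))\<^sup>2 / (2 * \<gamma>)
        \<le> real_of_ereal (g v2) + (norm (v2 - z))\<^sup>2 / (2 * \<gamma>)"
    by (rule three_point[OF assms(1,2) f2])
  ultimately have "(norm (v2 - v1))\<^sup>2 / (2 * \<gamma>) \<le> 0" by simp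
  then have "(norm (v2 - v1))\<^sup>2 \<le> 0" using assms(1) by (simp add: divide_le_0_iff)
  then show ?thesis by simp
qed

lemma prox_nonexp:
  assumes "0 < \<gamma>" "v1 \<in> Prox g \<gamma> z1" "v2 \<in> Prox g \<gamma> z2"
  shows "norm (v1 - v2) \<le> norm (z1 - z2)"
proof -
  have f1: "g v1 \<noteq> \<infinity>" using prox_fin[OF assms(1,2)] by (metis PInfty_neq_ereal(1))
  have f2: "g v2 \<noteq> \<infinity>" using prox_fin[OF assms(1,3)] by (metis PInfty_neq_ereal(1))
  have a: "real_of_ereal (g v1) + (z1 - v1) \<bullet> (v2 - v1) / \<gamma> \<le> real_of_ereal (g v2)"
    by (rule prox_sub[OF assms(1,2) f2])
  have b: "real_of_ereal (g v2) + (z2 - v2) \<bullet> (v1 - v2) / \<gamma> \<le> real_of_ereal (g v1)"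
    by (rule prox_sub[OF assms(1,3) f1])
  have "(z1 - v1) \<bullet> (v2 - v1) / \<gamma> + (z2 - v2) \<bullet> (v1 - v2) / \<gamma> \<le> 0" using a b by simp
  then have "(z1 - v1) \<bullet> (v2 - v1) + (z2 - v2) \<bullet> (v1 - v2) \<le> 0"
    using assms(1) by (simp add: add_divide_distrib[symmetric] divide_le_0_iff)
  moreover have "(z1 - v1) \<bullet> (v2 - v1) + (z2 - v2) \<bullet> (v1 - v2) = (norm (v1 - v2))\<^sup>2 - (z1 - z2) \<bullet> (v1 - v2)"
    by (simp add: power2_norm_eq_inner inner_diff_left inner_diff_right inner_commute algebra_simps)
  ultimately have "(norm (v1 - v2))\<^sup>2 \<le> (z1 - z2) \<bullet> (v1 - v2)" by simp
  also have "\<dots> \<le> norm (z1 - z2) * norm (v1 - v2)" by (rule norm_cauchy_schwarz)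
  finally have "norm (v1 - v2) * norm (v1 - v2) \<le> norm (z1 - z2) * norm (v1 - v2)"
    by (simp add: power2_eq_square)
  then show ?thesis
    by (cases "norm (v1 - v2) = 0") (auto simp: mult_le_cancel_right)
qed

end

lemma coerc:
  fixes \<gamma> r K0 s :: real
  assumes "0 < \<gamma>" "0 < r" "0 \<le> K0" "s > 8 * \<gamma> / r + 4 * \<gamma> * K0 + 1"
  shows "s\<^sup>2 / (2 * \<gamma>) - 2 * s / r > K0"
proof -
  have nn: "0 \<le> 8 * \<gamma> / r" "0 \<le> 4 * \<gamma> * K0" using assms by auto
  have s1: "s > 1" "s > 8 * \<gamma> / r" "s > 4 * \<gamma> * K0"
    using assms(4) nn by linarith+
  have "8 * \<gamma> \<le> r * s" using s1(2) assms(2) by (simp add: field_simps)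
  then have "8 * \<gamma> * s \<le> r * s * s" using s1(1) by (intro mult_right_mono) auto
  then have a: "2 * s / r \<le> s\<^sup>2 / (4 * \<gamma>)" using assms(1,2) by (simp add: field_simps power2_eq_square)
  have "s * 1 < s * s" using s1 by (intro mult_strict_left_mono) auto
  then have "4 * \<gamma> * K0 < s * s" using s1 by linarith
  then have b: "K0 < s\<^sup>2 / (4 * \<gamma>)" using assms(1) by (simp add: field_simps power2_eq_square)
  have "s\<^sup>2 / (2 * \<gamma>) = s\<^sup>2 / (4 * \<gamma>) + s\<^sup>2 / (4 * \<gamma>)" by (simp add: field_simps)
  then show ?thesis using a b by linarith
qed

context gprops
begin

lemma g_lower_linear:
  assumes lsc: "lsc g" and w0: "g w0 = ereal c0"
  obtains r where "0 < r" "\<And>x. g x \<ge> ereal (c0 - 1 - 2 * norm (x - w0) / r)"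
proof -
  have "closed {x. g x \<le> ereal (c0 - 1)}" using lsc unfolding lsc_def by auto
  then have "open (- {x. g x \<le> ereal (c0 - 1)})" by auto
  moreover have "w0 \<in> - {x. g x \<le> ereal (c0 - 1)}" using w0 by simp
  ultimately obtain r where r: "0 < r" "ball w0 r \<subseteq> - {x. g x \<le> ereal (c0 - 1)}"
    unfolding open_contains_ball by blast
  have near: "g y > ereal (c0 - 1)" if "norm (y - w0) < r" for y
    using r(2) that by (auto simp: dist_norm norm_minus_commute)
  have "g x \<ge> ereal (c0 - 1 - 2 * norm (x - w0) / r)" for x
  proof (cases "norm (x - w0) < r")
    case True
    have "ereal (c0 - 1 - 2 * norm (x - w0) / r) \<le> ereal (c0 - 1)" using r(1) by simp
    also have "\<dots> \<le> g x" using near[OF True] by simp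
    finally show ?thesis .
  next
    case False
    define d where "d = norm (x - w0)"
    have d: "d \<ge> r" "d > 0" using False r(1) d_def by auto
    define t where "t = r / (2 * d)"
    have t: "0 < t" "t \<le> 1" using d r(1) by (auto simp: t_def field_simps)
    define y where "y = (1 - t) *\<^sub>R w0 + t *\<^sub>R x"
    have "y - w0 = t *\<^sub>R (x - w0)" by (simp add: y_def algebra_simps)
    then have "norm (y - w0) = t * d" using t by (simp add: d_def)
    also have "\<dots> = r / 2" using d by (simp add: t_def)
    finally have "norm (y - w0) < r" using r(1) by simp
    then have gy: "g y > ereal (c0 - 1)" by (rule near)
    have conv: "g y \<le> ereal (1 - t) * g w0 + ereal t * g x"
      using g_convex t unfolding ereal_convex_def y_def by auto
    show ?thesis
    proof (cases "g x")
      case (real gx)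
      have conv': "g y \<le> ereal ((1 - t) * c0 + t * gx)" using conv by (simp add: w0 real)
      have "ereal (c0 - 1) < ereal ((1 - t) * c0 + t * gx)" using gy conv' by (rule less_le_trans)
      then have "c0 - 1 < (1 - t) * c0 + t * gx" by simp
      then have "t * (c0 - 1 / t) < t * gx" using t by (simp add: algebra_simps)
      then have "c0 - 1 / t < gx" using t by simp
      moreover have "1 / t = 2 * d / r" using d r(1) by (simp add: t_def)
      ultimately show ?thesis using real r(1) by (simp add: d_def)
    qed (use g_not_minf in auto)
  qed
  then show ?thesis using r(1) that by blast
qed

lemma prox_exists:
  assumes lsc: "lsc g" and \<gamma>: "0 < \<gamma>"
  shows "\<exists>v. v \<in> Prox g \<gamma> z"
proof -
  obtain w0 where "g w0 \<noteq> \<infinity>" using g_proper by auto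
  then obtain c0 where w0: "g w0 = ereal c0" using g_not_minf by (cases "g w0") auto
  obtain r where r: "0 < r" "\<And>x. g x \<ge> ereal (c0 - 1 - 2 * norm (x - w0) / r)"
    using g_lower_linear[OF lsc w0] by blast
  define \<Phi> where "\<Phi> x = g x + ereal ((norm (x - z))\<^sup>2 / (2 * \<gamma>))" for x
  define \<delta> where "\<delta> = norm (z - w0)"
  define C where "C = c0 + \<delta>\<^sup>2 / (2 * \<gamma>)"
  have \<Phi>w0: "\<Phi> w0 = ereal C" by (simp add: \<Phi>_def C_def w0 \<delta>_def norm_minus_commute)
  define K0 where "K0 = 1 + 2 * \<delta> / r + \<delta>\<^sup>2 / (2 * \<gamma>)"
  have K0: "0 \<le> K0" using r(1) \<gamma> by (simp add: K0_def \<delta>_def)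
  define R where "R = max \<delta> (8 * \<gamma> / r + 4 * \<gamma> * K0 + 1)"
  have lowb: "\<Phi> x \<ge> ereal (c0 - 1 - 2 * (norm (x - z) + \<delta>) / r + (norm (x - z))\<^sup>2 / (2 * \<gamma>))" for x
  proof -
    have "norm (x - w0) \<le> norm (x - z) + \<delta>"
      unfolding \<delta>_def by (metis diff_add_cancel norm_triangle_ineq add_diff_eq)
    then have "2 * norm (x - w0) / r \<le> 2 * (norm (x - z) + \<delta>) / r" using r(1)
      by (simp add: divide_right_mono)
    then have "ereal (c0 - 1 - 2 * (norm (x - z) + \<delta>) / r) \<le> g x"
      using r(2)[of x] order_trans[of "ereal (c0 - 1 - 2 * (norm (x - z) + \<delta>) / r)" "ereal (c0 - 1 - 2 * norm (x - w0) / r)" "g x"] by simp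
    then show ?thesis unfolding \<Phi>_def
      using add_right_mono[of "ereal (c0 - 1 - 2 * (norm (x - z) + \<delta>) / r)" "g x" "ereal ((norm (x - z))\<^sup>2 / (2 * \<gamma>))"]
      by simp
  qed
  have far: "\<Phi> x > ereal C" if "norm (x - z) > R" for x
  proof -
    have "(norm (x - z))\<^sup>2 / (2 * \<gamma>) - 2 * norm (x - z) / r > K0"
      using coerc[OF \<gamma> r(1) K0, of "norm (x - z)"] that by (simp add: R_def)
    then have "C < c0 - 1 - 2 * (norm (x - z) + \<delta>) / r + (norm (x - z))\<^sup>2 / (2 * \<gamma>)"
      unfolding C_def K0_def by (simp add: add_divide_distrib)
    then have "ereal C < ereal (c0 - 1 - 2 * (norm (x - z) + \<delta>) / r + (norm (x - z))\<^sup>2 / (2 * \<gamma>))" by simp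
    then show ?thesis using lowb[of x] by (rule less_le_trans)
  qed
  define K where "K = cball z R"
  have w0K: "w0 \<in> K" by (simp add: K_def R_def \<delta>_def dist_norm)
  have cK: "compact K" by (simp add: K_def)
  define lb where "lb = c0 - 1 - 2 * (R + \<delta>) / r"
  have lbK: "\<Phi> x \<ge> ereal lb" if "x \<in> K" for x
  proof -
    have "norm (x - z) \<le> R" using that by (simp add: K_def dist_norm norm_minus_commute)
    then have "2 * (norm (x - z) + \<delta>) / r \<le> 2 * (R + \<delta>) / r" using r(1) by (simp add: divide_right_mono)
    then have "lb \<le> c0 - 1 - 2 * (norm (x - z) + \<delta>) / r + (norm (x - z))\<^sup>2 / (2 * \<gamma>)"
      unfolding lb_def using \<gamma> by (smt (verit) divide_nonneg_pos zero_le_power2)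
    then have "ereal lb \<le> ereal (c0 - 1 - 2 * (norm (x - z) + \<delta>) / r + (norm (x - z))\<^sup>2 / (2 * \<gamma>))" by simp
    then show ?thesis using lowb[of x] by (rule order_trans)
  qed
  define m where "m = (INF x\<in>K. \<Phi> x)"
  have m1: "m \<le> ereal C" unfolding m_def using w0K \<Phi>w0 by (metis INF_lower)
  have m2: "ereal lb \<le> m" unfolding m_def using lbK by (rule INF_greatest)
  obtain mr where mr: "m = ereal mr" using m1 m2 by (cases m) auto
  have "\<exists>x\<in>K. \<Phi> x < ereal (mr + 1 / (Suc n))" for n :: nat
  proof -
    have "m < ereal (mr + 1 / (Suc n))" using mr by simp
    then show ?thesis unfolding m_def by (simp add: INF_less_iff)
  qed
  then obtain xs where xs: "\<And>n. xs n \<in> K" "\<And>n. \<Phi> (xs n) < ereal (mr + 1 / (Suc n))"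
    by metis
  obtain l \<sigma> where l: "l \<in> K" "strict_mono \<sigma>" "(xs \<circ> \<sigma>) \<longlonglongrightarrow> l"
    using seq_compactE[OF compact_imp_seq_compact[OF cK], of xs] xs(1) by blast
  define q where "q x = (norm (x - z))\<^sup>2 / (2 * \<gamma>)" for x
  have qc: "continuous_on UNIV q" unfolding q_def using \<gamma> by (intro continuous_intros) auto
  have qlim: "(\<lambda>n. q ((xs \<circ> \<sigma>) n)) \<longlonglongrightarrow> q l"
    using qc l(3) continuous_on_tendsto_compose[of UNIV q "xs \<circ> \<sigma>" l sequentially] by simp
  have gl: "g l \<le> ereal (mr + 2 * e - q l)" if e: "0 < e" for e
  proof -
    have ev1: "eventually (\<lambda>n. q ((xs \<circ> \<sigma>) n) > q l - e) sequentially"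
      using qlim e by (simp add: order_tendstoD(1))
    have "eventually (\<lambda>n. inverse (real (Suc n)) < e) sequentially"
      using order_tendstoD(2)[OF LIMSEQ_inverse_real_of_nat e] .
    then have "eventually (\<lambda>n. 1 / real (Suc n) < e) sequentially" by (simp add: inverse_eq_divide)
    then have ev2: "eventually (\<lambda>n. 1 / real (Suc (\<sigma> n)) < e) sequentially"
      using filterlim_subseq[OF l(2)] unfolding filterlim_iff by blast
    have "eventually (\<lambda>n. (xs \<circ> \<sigma>) n \<in> {x. g x \<le> ereal (mr + 2 * e - q l)}) sequentially"
      using ev1 ev2
    proof eventually_elim
      case (elim n)
      let ?x = "xs (\<sigma> n)"
      have "g ?x + ereal (q ?x) < ereal (mr + 1 / (Suc (\<sigma> n)))"
        using xs(2)[of "\<sigma> n"] by (simp add: \<Phi>_def q_def)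
      moreover have "g ?x \<noteq> \<infinity>" using calculation by auto
      then obtain gx where gx: "g ?x = ereal gx" using g_not_minf by (cases "g ?x") auto
      ultimately have "gx + q ?x < mr + 1 / (Suc (\<sigma> n))" by simp
      then have "gx \<le> mr + 2 * e - q l" using elim by simp
      then show ?case by (simp add: gx)
    qed
    moreover have "closed {x. g x \<le> ereal (mr + 2 * e - q l)}" using lsc unfolding lsc_def by auto
    ultimately have "l \<in> {x. g x \<le> ereal (mr + 2 * e - q l)}"
      using Lim_in_closed_set[OF _ _ _ l(3)] by (metis trivial_limit_sequentially comp_apply)
    then show ?thesis by simp
  qed
  have "g l \<noteq> \<infinity>" using gl[of 1] by auto
  then obtain gl' where gl': "g l = ereal gl'" using g_not_minf by (cases "g l") auto
  have "gl' + q l \<le> mr"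
  proof (rule field_le_epsilon)
    fix e :: real assume "0 < e"
    then have "gl' \<le> mr + 2 * (e / 2) - q l" using gl[of "e/2"] by (simp add: gl')
    then show "gl' + q l \<le> mr + e" by simp
  qed
  then have \<Phi>l: "\<Phi> l \<le> m" by (simp add: \<Phi>_def gl' mr q_def)
  have "\<forall>w. \<Phi> l \<le> \<Phi> w"
  proof
    fix w
    show "\<Phi> l \<le> \<Phi> w"
    proof (cases "w \<in> K")
      case True
      then have "m \<le> \<Phi> w" unfolding m_def by (rule INF_lower)
      then show ?thesis using \<Phi>l by simp
    next
      case False
      then have "norm (w - z) > R" by (simp add: K_def dist_norm norm_minus_commute)
      then have "\<Phi> w > ereal C" by (rule far)
      then show ?thesis using \<Phi>l m1 by simp
    qed
  qed
  then show ?thesis unfolding Prox_def \<Phi>_def by auto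
qed

end

locale detset = gprops g for g :: "'a::euclidean_space \<Rightarrow> ereal" +
  fixes f :: "'a \<Rightarrow> real" and gradf :: "'a \<Rightarrow> 'a" and L :: real
  assumes f_grad: "\<forall>x. (f has_derivative (\<lambda>h. gradf x \<bullet> h)) (at x)"
    and L_pos: "0 < L"
    and gradf_lip: "\<forall>x y. norm (gradf x - gradf y) \<le> L * norm (x - y)"
    and f_convex: "convex_on UNIV f"
    and g_lsc: "lsc g"
begin

definition proxf :: "real \<Rightarrow> 'a \<Rightarrow> 'a" where
  "proxf \<gamma> z = (THE v. v \<in> Prox g \<gamma> z)"

lemma proxf_eq: assumes "0 < \<gamma>" "v \<in> Prox g \<gamma> z" shows "proxf \<gamma> z = v"
  unfolding proxf_def
proof (rule the_equality[where P="\<lambda>v. v \<in> Prox g \<gamma> z", OF assms(2)])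
  fix u assume "u \<in> Prox g \<gamma> z"
  then show "u = v" by (rule prox_unique[OF assms(1) _ assms(2)])
qed

lemma proxf_in: assumes "0 < \<gamma>" shows "proxf \<gamma> z \<in> Prox g \<gamma> z"
proof -
  obtain v where v: "v \<in> Prox g \<gamma> z" using prox_exists[OF g_lsc assms, of z] by blast
  show ?thesis using proxf_eq[OF assms v] v by simp
qed

lemma proxf_nonexp: assumes "0 < \<gamma>" shows "norm (proxf \<gamma> z1 - proxf \<gamma> z2) \<le> norm (z1 - z2)"
  using prox_nonexp[OF assms proxf_in[OF assms] proxf_in[OF assms]] .

lemma proxf_cont: assumes "0 < \<gamma>" shows "continuous_on UNIV (proxf \<gamma>)"
proof -
  have "lipschitz_on 1 UNIV (proxf \<gamma>)"
    by (rule lipschitz_onI) (use proxf_nonexp[OF assms] in \<open>auto simp: dist_norm\<close>)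
  then show ?thesis by (rule lipschitz_on_continuous_on)
qed

definition Fr :: "'a \<Rightarrow> real" where "Fr x = f x + real_of_ereal (g x)"

lemma one_step:
  assumes \<gamma>: "0 < \<gamma>" "\<gamma> \<le> 1 / L" and v: "v \<in> Prox g \<gamma> (x - \<gamma> *\<^sub>R h)" and w: "g w \<noteq> \<infinity>"
  shows "Fr v \<le> Fr w + ((norm (x - w))\<^sup>2 - (norm (v - w))\<^sup>2) / (2 * \<gamma>) + (w - v) \<bullet> (h - gradf x)"
proof -
  define z where "z = x - \<gamma> *\<^sub>R h"
  define A where "A = (norm (w - x))\<^sup>2"
  define B where "B = (norm (v - x))\<^sup>2"
  define C where "C = (norm (w - v))\<^sup>2"
  define Hh where "Hh = (norm h)\<^sup>2"
  have tp: "real_of_ereal (g v) + (norm (v - z))\<^sup>2 / (2 * \<gamma>) + C / (2 * \<gamma>)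
        \<le> real_of_ereal (g w) + (norm (w - z))\<^sup>2 / (2 * \<gamma>)"
    using three_point[OF \<gamma>(1) v[folded z_def] w] by (simp add: C_def)
  have "(norm (w - z))\<^sup>2 = A + 2 * \<gamma> * ((w - x) \<bullet> h) + \<gamma>\<^sup>2 * Hh"
    using norm_add_sq[of "w - x" \<gamma> h] by (simp add: z_def A_def Hh_def algebra_simps)
  then have e1: "(norm (w - z))\<^sup>2 / (2 * \<gamma>) = A / (2 * \<gamma>) + (w - x) \<bullet> h + \<gamma> * Hh / 2"
    using \<gamma>(1) by (simp add: field_simps power2_eq_square)
  have "(norm (v - z))\<^sup>2 = B + 2 * \<gamma> * ((v - x) \<bullet> h) + \<gamma>\<^sup>2 * Hh"
    using norm_add_sq[of "v - x" \<gamma> h] by (simp add: z_def B_def Hh_def algebra_simps)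
  then have e2: "(norm (v - z))\<^sup>2 / (2 * \<gamma>) = B / (2 * \<gamma>) + (v - x) \<bullet> h + \<gamma> * Hh / 2"
    using \<gamma>(1) by (simp add: field_simps power2_eq_square)
  have d: "f v \<le> f x + gradf x \<bullet> (v - x) + L / 2 * B"
    using descent[OF f_grad gradf_lip] B_def by blast
  have gi: "f x + gradf x \<bullet> (w - x) \<le> f w" by (rule grad_ineq[OF f_convex f_grad])
  have "L \<le> 1 / \<gamma>" using \<gamma> L_pos by (simp add: field_simps)
  then have "L / 2 * B \<le> (1 / \<gamma>) / 2 * B" using B_def by (intro mult_right_mono) auto
  then have lb: "L / 2 * B \<le> B / (2 * \<gamma>)" by simp
  have i1: "(w - x) \<bullet> h - (v - x) \<bullet> h = (w - v) \<bullet> h" by (simp add: inner_diff_left)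
  have i2: "(w - v) \<bullet> (h - gradf x) = (w - v) \<bullet> h - gradf x \<bullet> (w - v)"
    by (simp add: inner_diff_right inner_commute)
  have i3: "gradf x \<bullet> (v - x) - gradf x \<bullet> (w - x) = - (gradf x \<bullet> (w - v))"
    by (simp add: inner_diff_right)
  have nA: "A = (norm (x - w))\<^sup>2" by (simp add: A_def norm_minus_commute)
  have nC: "C = (norm (v - w))\<^sup>2" by (simp add: C_def norm_minus_commute)
  have "((norm (x - w))\<^sup>2 - (norm (v - w))\<^sup>2) / (2 * \<gamma>) = A / (2 * \<gamma>) - C / (2 * \<gamma>)"
    by (simp add: nA nC diff_divide_distrib)
  then show ?thesis unfolding Fr_def using tp e1 e2 d gi lb i1 i2 i3 by linarith
qed

lemma T_contract:
  assumes \<gamma>: "0 < \<gamma>" "\<gamma> \<le> 1 / L"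
    and p: "p \<in> Prox g \<gamma> (x - \<gamma> *\<^sub>R gradf x)"
    and smin: "\<forall>y. ereal (f s) + g s \<le> ereal (f y) + g y"
  shows "norm (p - s) \<le> norm (x - s)"
proof -
  have gs: "g s \<noteq> \<infinity>"
  proof
    assume "g s = \<infinity>"
    obtain y where "g y \<noteq> \<infinity>" using g_proper by auto
    then show False using smin[rule_format, of y] \<open>g s = \<infinity>\<close> g_not_minf by (cases "g y") auto
  qed
  have a: "Fr p \<le> Fr s + ((norm (x - s))\<^sup>2 - (norm (p - s))\<^sup>2) / (2 * \<gamma>)"
    using one_step[OF \<gamma> p gs] by simp
  have gp: "g p = ereal (real_of_ereal (g p))" using prox_fin[OF \<gamma>(1) p] .
  have gs': "g s = ereal (real_of_ereal (g s))" using gs g_not_minf by (cases "g s") auto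
  have "ereal (f s) + g s \<le> ereal (f p) + g p" using smin by blast
  then have "ereal (f s + real_of_ereal (g s)) \<le> ereal (f p + real_of_ereal (g p))"
    using gp gs' by (metis plus_ereal.simps(1))
  then have "Fr s \<le> Fr p" unfolding Fr_def by simp
  then have "0 \<le> ((norm (x - s))\<^sup>2 - (norm (p - s))\<^sup>2) / (2 * \<gamma>)" using a by linarith
  then have "(norm (p - s))\<^sup>2 \<le> (norm (x - s))\<^sup>2" using \<gamma>(1) by (simp add: zero_le_divide_iff)
  then show ?thesis by (rule power2_le_imp_le) simp
qed

lemma stoch_step:
  assumes \<gamma>: "0 < \<gamma>" "\<gamma> \<le> 1 / L"
    and v: "v \<in> Prox g \<gamma> (x - \<gamma> *\<^sub>R h)"
    and w: "g w \<noteq> \<infinity>"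
  shows "Fr v \<le> Fr w + ((norm (x - w))\<^sup>2 - (norm (v - w))\<^sup>2) / (2 * \<gamma>)
      + (w - proxf \<gamma> (x - \<gamma> *\<^sub>R gradf x)) \<bullet> (h - gradf x) + \<gamma> * (norm (h - gradf x))\<^sup>2"
proof -
  define p where "p = proxf \<gamma> (x - \<gamma> *\<^sub>R gradf x)"
  define \<eta> where "\<eta> = h - gradf x"
  have a: "Fr v \<le> Fr w + ((norm (x - w))\<^sup>2 - (norm (v - w))\<^sup>2) / (2 * \<gamma>) + (w - v) \<bullet> \<eta>"
    using one_step[OF \<gamma> v w] by (simp add: \<eta>_def)
  have vp: "v = proxf \<gamma> (x - \<gamma> *\<^sub>R h)" using proxf_eq[OF \<gamma>(1) v] by simp
  have "norm (p - v) \<le> norm ((x - \<gamma> *\<^sub>R gradf x) - (x - \<gamma> *\<^sub>R h))"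
    unfolding p_def vp by (rule proxf_nonexp[OF \<gamma>(1)])
  also have "(x - \<gamma> *\<^sub>R gradf x) - (x - \<gamma> *\<^sub>R h) = \<gamma> *\<^sub>R \<eta>" by (simp add: \<eta>_def algebra_simps)
  finally have pv: "norm (p - v) \<le> \<gamma> * norm \<eta>" using \<gamma>(1) by simp
  have "(p - v) \<bullet> \<eta> \<le> norm (p - v) * norm \<eta>" by (rule norm_cauchy_schwarz)
  also have "\<dots> \<le> \<gamma> * norm \<eta> * norm \<eta>" using pv by (intro mult_right_mono) auto
  finally have b: "(p - v) \<bullet> \<eta> \<le> \<gamma> * (norm \<eta>)\<^sup>2" by (simp add: power2_eq_square mult.assoc)
  have c: "(w - v) \<bullet> \<eta> = (w - p) \<bullet> \<eta> + (p - v) \<bullet> \<eta>" by (simp add: inner_diff_left)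
  show ?thesis using a b c unfolding p_def[symmetric] \<eta>_def[symmetric] by linarith
qed

end

definition nfgen :: "'b measure \<Rightarrow> ('b \<Rightarrow> 'a::topological_space) \<Rightarrow> (nat \<Rightarrow> 'b \<Rightarrow> 'a) \<Rightarrow> nat \<Rightarrow> 'b set set" where
  "nfgen M X0 H n = ({X0 -` A \<inter> space M | A. A \<in> sets borel} \<union>
      (\<Union>i\<in>{1..n}. {H i -` A \<inter> space M | A. A \<in> sets borel}))"

lemma nfgen_Pow: "nfgen M X0 H n \<subseteq> Pow (space M)"
  unfolding nfgen_def by auto

lemma nf_space[simp]: "space (nat_filtration M X0 H n) = space M"
  unfolding nat_filtration_def by (simp add: space_measure_of_conv)

lemma nf_sets: "sets (nat_filtration M X0 H n) = sigma_sets (space M) (nfgen M X0 H n)"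
  unfolding nat_filtration_def nfgen_def[symmetric] using nfgen_Pow[of M X0 H n]
  by (simp add: sets_measure_of_conv)

lemma nf_sub:
  assumes "X0 \<in> borel_measurable M" "\<forall>i\<in>{1..n}. H i \<in> borel_measurable M"
  shows "subalgebra M (nat_filtration M X0 H n)"
proof -
  have "nfgen M X0 H n \<subseteq> sets M"
    using assms unfolding nfgen_def by (auto intro: measurable_sets)
  then have "sigma_sets (space M) (nfgen M X0 H n) \<subseteq> sets M"
    by (rule sets.sigma_sets_subset)
  then show ?thesis unfolding subalgebra_def nf_sets by simp
qed

lemma nf_mono:
  assumes "m \<le> n"
  shows "subalgebra (nat_filtration M X0 H n) (nat_filtration M X0 H m)"
proof -
  have "nfgen M X0 H m \<subseteq> nfgen M X0 H n" using assms unfolding nfgen_def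
    by (intro Un_mono order_refl UN_mono) auto
  then show ?thesis unfolding subalgebra_def nf_sets by (simp add: sigma_sets_mono')
qed

lemma nf_X0:
  fixes X0 :: "'b \<Rightarrow> 'a::topological_space" and H :: "nat \<Rightarrow> 'b \<Rightarrow> 'a"
  shows "X0 \<in> borel_measurable (nat_filtration M X0 H n)"
proof (rule measurableI)
  fix A :: "'a set" assume "A \<in> sets borel"
  then have "X0 -` A \<inter> space M \<in> nfgen M X0 H n" unfolding nfgen_def by auto
  then show "X0 -` A \<inter> space (nat_filtration M X0 H n) \<in> sets (nat_filtration M X0 H n)"
    unfolding nf_sets by auto
qed simp

lemma nf_H:
  fixes X0 :: "'b \<Rightarrow> 'a::topological_space" and H :: "nat \<Rightarrow> 'b \<Rightarrow> 'a"
  assumes "1 \<le> i" "i \<le> n"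
  shows "H i \<in> borel_measurable (nat_filtration M X0 H n)"
proof (rule measurableI)
  fix A :: "'a set" assume "A \<in> sets borel"
  then have "H i -` A \<inter> space M \<in> nfgen M X0 H n" unfolding nfgen_def using assms by auto
  then show "H i -` A \<inter> space (nat_filtration M X0 H n) \<in> sets (nat_filtration M X0 H n)"
    unfolding nf_sets by auto
qed simp

lemma ereal_exp_integrable:
  fixes X :: "'b \<Rightarrow> real"
  assumes "integrable M X" "\<And>\<omega>. \<omega> \<in> space M \<Longrightarrow> Y \<omega> = ereal (X \<omega>)"
  shows "ereal_expectation M Y = ereal (integral\<^sup>L M X)"
proof -
  have X[measurable]: "X \<in> borel_measurable M" using assms(1) by auto
  have e1: "(\<integral>\<^sup>+\<omega>. e2ennreal (Y \<omega>) \<partial>M) = (\<integral>\<^sup>+\<omega>. ennreal (X \<omega>) \<partial>M)"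
    by (rule nn_integral_cong) (simp add: assms(2))
  have e2: "(\<integral>\<^sup>+\<omega>. e2ennreal (- Y \<omega>) \<partial>M) = (\<integral>\<^sup>+\<omega>. ennreal (- X \<omega>) \<partial>M)"
    by (rule nn_integral_cong) (simp add: assms(2))
  have f1: "(\<integral>\<^sup>+\<omega>. ennreal (X \<omega>) \<partial>M) \<noteq> \<infinity>"
  proof -
    have "(\<integral>\<^sup>+\<omega>. ennreal (X \<omega>) \<partial>M) \<le> (\<integral>\<^sup>+\<omega>. ennreal (norm (X \<omega>)) \<partial>M)"
      by (intro nn_integral_mono) (simp add: ennreal_leI)
    also have "\<dots> < \<infinity>" using assms(1) by (simp add: integrable_iff_bounded)
    finally show ?thesis by simp
  qed
  have f2: "(\<integral>\<^sup>+\<omega>. ennreal (- X \<omega>) \<partial>M) \<noteq> \<infinity>"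
  proof -
    have "(\<integral>\<^sup>+\<omega>. ennreal (- X \<omega>) \<partial>M) \<le> (\<integral>\<^sup>+\<omega>. ennreal (norm (X \<omega>)) \<partial>M)"
      by (intro nn_integral_mono) (simp add: ennreal_leI)
    also have "\<dots> < \<infinity>" using assms(1) by (simp add: integrable_iff_bounded)
    finally show ?thesis by simp
  qed
  have c: "enn2ereal x = ereal (enn2real x)" if "x \<noteq> \<infinity>" for x :: ennreal
    using that by (cases x rule: ennreal_cases) auto
  show ?thesis
    unfolding ereal_expectation_def e1 e2 real_lebesgue_integral_def[OF assms(1)]
    using c[OF f1] c[OF f2] by simp
qed

lemma telescope:
  fixes c d :: "nat \<Rightarrow> real"
  assumes "1 \<le> n" "\<And>k. 1 \<le> k \<Longrightarrow> 0 \<le> c k" "\<And>k. 1 \<le> k \<Longrightarrow> c k \<le> c (Suc k)"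
    "\<And>k. 0 \<le> d k" "\<And>k. d k \<le> U"
  shows "(\<Sum>k=1..n. c k * (d (k - 1) - d k)) \<le> c n * (U - d n)"
  using assms(1)
proof (induction n rule: dec_induct)
  case base
  show ?case using assms(2)[of 1] assms(5)[of 0] by (simp add: mult_left_mono)
next
  case (step m)
  have "(\<Sum>k=1..Suc m. c k * (d (k - 1) - d k)) = (\<Sum>k=1..m. c k * (d (k - 1) - d k)) + c (Suc m) * (d m - d (Suc m))"
    by simp
  also have "\<dots> \<le> c m * (U - d m) + c (Suc m) * (d m - d (Suc m))" using step.IH by simp
  also have "c m * (U - d m) \<le> c (Suc m) * (U - d m)"
    using assms(3)[of m] assms(5)[of m] step.hyps by (intro mult_right_mono) auto
  finally show ?case by (simp add: algebra_simps)
qed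


locale mset =
  fixes f :: "'a::euclidean_space \<Rightarrow> real" and g :: "'a \<Rightarrow> ereal"
    and gradf :: "'a \<Rightarrow> 'a" and L :: real
    and M :: "'b measure"
    and \<gamma> a :: "nat \<Rightarrow> real"
    and \<theta> H :: "nat \<Rightarrow> 'b \<Rightarrow> 'a"
    and B :: real and \<theta>s :: 'a
  assumes prob: "prob_space M"
    and g_proper: "\<exists>x. g x \<noteq> \<infinity>" and g_not_minf: "\<forall>x. g x \<noteq> -\<infinity>"
    and g_convex: "ereal_convex g" and g_lsc: "lsc g"
    and f_grad: "\<forall>x. (f has_derivative (\<lambda>h. gradf x \<bullet> h)) (at x)"
    and gradf_cont: "continuous_on UNIV gradf"
    and L_pos: "0 < L"
    and gradf_lip: "\<forall>x y. norm (gradf x - gradf y) \<le> L * norm (x - y)"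
    and f_convex: "convex_on UNIV f"
    and \<gamma>_pos: "\<forall>k\<ge>1. 0 < \<gamma> k \<and> \<gamma> k \<le> 1 / L"
    and \<theta>0_meas: "\<theta> 0 \<in> borel_measurable M"
    and H_meas: "\<forall>k\<ge>1. H k \<in> borel_measurable M"
    and H_int: "\<forall>k\<ge>1. integrable M (H k)"
    and iter: "\<forall>k. \<forall>\<omega>\<in>space M. \<theta> (Suc k) \<omega> \<in> Prox g (\<gamma> (Suc k)) (\<theta> k \<omega> - \<gamma> (Suc k) *\<^sub>R H (Suc k) \<omega>)"
    and bounded: "AE \<omega> in M. \<forall>k. norm (\<theta> k \<omega>) \<le> B"
    and \<theta>s_min: "\<forall>y. ereal (f \<theta>s) + g \<theta>s \<le> ereal (f y) + g y"
begin

sublocale prob_space M by (rule prob)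

sublocale D: detset g f gradf L
  by unfold_locales (use g_proper g_not_minf g_convex f_grad L_pos gradf_lip f_convex g_lsc in auto)

abbreviation "Fk \<equiv> nat_filtration M (\<theta> 0) H"
definition "\<eta> j \<omega> = H (Suc j) \<omega> - gradf (\<theta> j \<omega>)"
definition "P j \<omega> = D.proxf (\<gamma> (Suc j)) (\<theta> j \<omega> - \<gamma> (Suc j) *\<^sub>R gradf (\<theta> j \<omega>))"
definition "Dd j \<omega> = (norm (\<theta> j \<omega> - \<theta>s))\<^sup>2"
definition "Fs = D.Fr \<theta>s"
definition "Bs = B + norm \<theta>s"

lemma B_nn: "0 \<le> B"
proof (rule ccontr)
  assume "\<not> 0 \<le> B"
  have "AE \<omega> in M. False" using bounded
  proof eventually_elim
    case (elim \<omega>)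
    show False using elim[rule_format, of 0] \<open>\<not> 0 \<le> B\<close> norm_ge_zero[of "\<theta> 0 \<omega>"] by linarith
  qed
  then show False by (simp add: AE_False)
qed

lemma Bs_nn: "0 \<le> Bs" using B_nn by (simp add: Bs_def)

lemma gs_fin: "g \<theta>s = ereal (real_of_ereal (g \<theta>s))"
proof -
  obtain y where "g y \<noteq> \<infinity>" using g_proper by auto
  then have "g \<theta>s \<noteq> \<infinity>" using \<theta>s_min[rule_format, of y] g_not_minf by (cases "g y"; cases "g \<theta>s") auto
  then show ?thesis using g_not_minf by (cases "g \<theta>s") auto
qed

lemma gam: "0 < \<gamma> (Suc j)" "\<gamma> (Suc j) \<le> 1 / L" using \<gamma>_pos by auto

lemma sub_Fk: "subalgebra M (Fk k)"
  by (rule nf_sub) (use \<theta>0_meas H_meas in auto)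

lemma fin_sub: "sigma_finite_subalgebra M (Fk k)"
proof -
  have "finite_measure_subalgebra M (Fk k)"
    unfolding finite_measure_subalgebra_def finite_measure_subalgebra_axioms_def
    using sub_Fk finite_measure_axioms by auto
  then show ?thesis by (rule finite_measure_subalgebra_is_sigma_finite)
qed

lemma gradf_bm[measurable]: "gradf \<in> borel_measurable borel"
  using gradf_cont by (rule borel_measurable_continuous_onI)

lemma proxf_bm: "D.proxf (\<gamma> (Suc j)) \<in> borel_measurable borel"
  by (rule borel_measurable_continuous_onI[OF D.proxf_cont[OF gam(1)]])

lemma \<theta>_F: "\<theta> k \<in> borel_measurable (Fk k)"
proof (induction k)
  case 0
  show ?case by (rule nf_X0)
next
  case (Suc k)
  have s: "subalgebra (Fk (Suc k)) (Fk k)" by (rule nf_mono) simp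
  have t[measurable]: "\<theta> k \<in> borel_measurable (Fk (Suc k))" by (rule measurable_from_subalg[OF s Suc.IH])
  have h[measurable]: "H (Suc k) \<in> borel_measurable (Fk (Suc k))" by (rule nf_H) auto
  have c: "continuous_on UNIV (\<lambda>x. D.proxf (\<gamma> (Suc k)) (fst x - \<gamma> (Suc k) *\<^sub>R snd x))"
    by (intro continuous_on_compose2[OF D.proxf_cont[OF gam(1)]] continuous_intros) auto
  have "(\<lambda>\<omega>. D.proxf (\<gamma> (Suc k)) (\<theta> k \<omega> - \<gamma> (Suc k) *\<^sub>R H (Suc k) \<omega>)) \<in> borel_measurable (Fk (Suc k))"
    using borel_measurable_continuous_Pair[OF t h c] by simp
  moreover have "\<theta> (Suc k) \<omega> = D.proxf (\<gamma> (Suc k)) (\<theta> k \<omega> - \<gamma> (Suc k) *\<^sub>R H (Suc k) \<omega>)"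
    if "\<omega> \<in> space (Fk (Suc k))" for \<omega>
  proof -
    have "\<omega> \<in> space M" using that by simp
    then show ?thesis by (rule D.proxf_eq[OF gam(1) iter[rule_format], symmetric])
  qed
  ultimately show ?case using measurable_cong by (metis (no_types, lifting))
qed

lemma \<theta>_M[measurable]: "\<theta> k \<in> borel_measurable M"
  by (rule measurable_from_subalg[OF sub_Fk \<theta>_F])

lemma P_F: "P j \<in> borel_measurable (Fk j)"
proof -
  have [measurable]: "\<theta> j \<in> borel_measurable (Fk j)" by (rule \<theta>_F)
  have [measurable]: "D.proxf (\<gamma> (Suc j)) \<in> borel_measurable borel" by (rule proxf_bm)
  show ?thesis unfolding P_def by measurable
qed

lemma P_M[measurable]: "P j \<in> borel_measurable M"
  by (rule measurable_from_subalg[OF sub_Fk P_F])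

lemma H_M[measurable]: "H (Suc j) \<in> borel_measurable M" using H_meas by auto

lemma \<eta>_M[measurable]: "\<eta> j \<in> borel_measurable M" unfolding \<eta>_def by measurable

lemma Dd_M[measurable]: "Dd j \<in> borel_measurable M" unfolding Dd_def by measurable

lemma \<theta>_prox: "\<omega> \<in> space M \<Longrightarrow> \<theta> (Suc j) \<omega> \<in> Prox g (\<gamma> (Suc j)) (\<theta> j \<omega> - \<gamma> (Suc j) *\<^sub>R H (Suc j) \<omega>)"
  using iter by auto

lemma gs_ninf: "g \<theta>s \<noteq> \<infinity>" using gs_fin by (metis PInfty_neq_ereal(1))

lemma pathwise:
  assumes "\<omega> \<in> space M"
  shows "D.Fr (\<theta> (Suc j) \<omega>) \<le> Fs + (Dd j \<omega> - Dd (Suc j) \<omega>) / (2 * \<gamma> (Suc j))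
           + (\<theta>s - P j \<omega>) \<bullet> \<eta> j \<omega> + \<gamma> (Suc j) * (norm (\<eta> j \<omega>))\<^sup>2"
  using D.stoch_step[OF gam \<theta>_prox[OF assms] gs_ninf]
  by (simp add: Fs_def Dd_def P_def \<eta>_def diff_divide_distrib)

lemma Fr_eq:
  assumes "\<omega> \<in> space M"
  shows "ereal (f (\<theta> (Suc j) \<omega>)) + g (\<theta> (Suc j) \<omega>) = ereal (D.Fr (\<theta> (Suc j) \<omega>))"
  using D.prox_fin[OF gam(1) \<theta>_prox[OF assms]] unfolding D.Fr_def by (metis plus_ereal.simps(1))

lemma Fr_lower:
  assumes "\<omega> \<in> space M"
  shows "Fs \<le> D.Fr (\<theta> (Suc j) \<omega>)"
proof -
  have "ereal Fs \<le> ereal (D.Fr (\<theta> (Suc j) \<omega>))"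
    using \<theta>s_min[rule_format, of "\<theta> (Suc j) \<omega>"] Fr_eq[OF assms] gs_fin unfolding Fs_def D.Fr_def
    by (metis plus_ereal.simps(1))
  then show ?thesis by simp
qed

lemma Dd_bound: "AE \<omega> in M. Dd j \<omega> \<le> Bs\<^sup>2"
  using bounded
proof eventually_elim
  case (elim \<omega>)
  have "norm (\<theta> j \<omega> - \<theta>s) \<le> norm (\<theta> j \<omega>) + norm \<theta>s" by (rule norm_triangle_ineq4)
  also have "\<dots> \<le> Bs" using elim by (simp add: Bs_def)
  finally show ?case unfolding Dd_def by (intro power_mono) auto
qed

lemma P_bound: "AE \<omega> in M. norm (\<theta>s - P j \<omega>) \<le> Bs"
  using bounded
proof eventually_elim
  case (elim \<omega>)
  have "norm (P j \<omega> - \<theta>s) \<le> norm (\<theta> j \<omega> - \<theta>s)"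
    unfolding P_def by (rule D.T_contract[OF gam D.proxf_in[OF gam(1)] \<theta>s_min])
  also have "\<dots> \<le> norm (\<theta> j \<omega>) + norm \<theta>s" by (rule norm_triangle_ineq4)
  also have "\<dots> \<le> Bs" using elim by (simp add: Bs_def)
  finally show ?case by (simp add: norm_minus_commute)
qed

end

context mset
begin

definition "V j = vcond_exp M (Fk j) (\<eta> j)"

lemma gradf_bound: "AE \<omega> in M. norm (gradf (\<theta> j \<omega>)) \<le> norm (gradf 0) + L * B"
  using bounded
proof eventually_elim
  case (elim \<omega>)
  have "norm (gradf (\<theta> j \<omega>)) \<le> norm (gradf 0) + norm (gradf (\<theta> j \<omega>) - gradf 0)"
    by (metis add.commute diff_add_cancel norm_triangle_ineq)
  also have "norm (gradf (\<theta> j \<omega>) - gradf 0) \<le> L * norm (\<theta> j \<omega>)"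
    using gradf_lip[rule_format, of "\<theta> j \<omega>" 0] by simp
  also have "L * norm (\<theta> j \<omega>) \<le> L * B" using elim L_pos by (intro mult_left_mono) auto
  finally show ?case by simp
qed

lemma \<eta>_int: "integrable M (\<eta> j)"
proof -
  have "integrable M (\<lambda>\<omega>. gradf (\<theta> j \<omega>))"
    by (rule integrable_const_bound[OF gradf_bound]) measurable
  moreover have "integrable M (H (Suc j))" using H_int by auto
  ultimately show ?thesis unfolding \<eta>_def by (intro Bochner_Integration.integrable_diff)
qed

lemma rce_int: "integrable M (real_cond_exp M (Fk j) (\<lambda>\<omega>. \<eta> j \<omega> \<bullet> b))"
  by (rule sigma_finite_subalgebra.real_cond_exp_int(1)[OF fin_sub]) (use \<eta>_int in auto)

lemma V_int: "integrable M (V j)"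
  unfolding V_def vcond_exp_def using rce_int by (intro Bochner_Integration.integrable_sum integrable_scaleR_left) auto

lemma e1_int: "integrable M (\<lambda>\<omega>. norm (V j \<omega>))"
  using V_int by (rule Bochner_Integration.integrable_norm)

lemma inner_int: "integrable M (\<lambda>\<omega>. (\<theta>s - P j \<omega>) \<bullet> \<eta> j \<omega>)"
proof (rule Bochner_Integration.integrable_bound)
  show "integrable M (\<lambda>\<omega>. Bs * norm (\<eta> j \<omega>))" using \<eta>_int by auto
  show "(\<lambda>\<omega>. (\<theta>s - P j \<omega>) \<bullet> \<eta> j \<omega>) \<in> borel_measurable M" by measurable
  show "AE \<omega> in M. norm ((\<theta>s - P j \<omega>) \<bullet> \<eta> j \<omega>) \<le> norm (Bs * norm (\<eta> j \<omega>))"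
    using P_bound[of j]
  proof eventually_elim
    case (elim \<omega>)
    have "norm ((\<theta>s - P j \<omega>) \<bullet> \<eta> j \<omega>) \<le> norm (\<theta>s - P j \<omega>) * norm (\<eta> j \<omega>)"
      by (simp add: Cauchy_Schwarz_ineq2)
    also have "\<dots> \<le> Bs * norm (\<eta> j \<omega>)" using elim by (intro mult_right_mono) auto
    finally show ?case using Bs_nn by simp
  qed
qed

lemma inner_bound:
  "(\<integral>\<omega>. (\<theta>s - P j \<omega>) \<bullet> \<eta> j \<omega> \<partial>M) \<le> Bs * (\<integral>\<omega>. norm (V j \<omega>) \<partial>M)"
proof -
  interpret S: sigma_finite_subalgebra M "Fk j" by (rule fin_sub)
  define z where "z \<omega> = \<theta>s - P j \<omega>" for \<omega>
  define r where "r b = real_cond_exp M (Fk j) (\<lambda>\<omega>. \<eta> j \<omega> \<bullet> b)" for b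
  have zF[measurable]: "(\<lambda>\<omega>. z \<omega> \<bullet> b) \<in> borel_measurable (Fk j)" for b
  proof -
    have [measurable]: "P j \<in> borel_measurable (Fk j)" by (rule P_F)
    show ?thesis unfolding z_def by measurable
  qed
  have zb: "AE \<omega> in M. norm (z \<omega>) \<le> Bs" using P_bound[of j] by (simp add: z_def)
  have i1: "integrable M (\<lambda>\<omega>. (z \<omega> \<bullet> b) * (\<eta> j \<omega> \<bullet> b))" if b: "b \<in> Basis" for b
  proof (rule Bochner_Integration.integrable_bound)
    show "integrable M (\<lambda>\<omega>. Bs * (\<eta> j \<omega> \<bullet> b))" using \<eta>_int by auto
    show "(\<lambda>\<omega>. (z \<omega> \<bullet> b) * (\<eta> j \<omega> \<bullet> b)) \<in> borel_measurable M" unfolding z_def by measurable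
    show "AE \<omega> in M. norm ((z \<omega> \<bullet> b) * (\<eta> j \<omega> \<bullet> b)) \<le> norm (Bs * (\<eta> j \<omega> \<bullet> b))"
      using zb
    proof eventually_elim
      case (elim \<omega>)
      have "\<bar>z \<omega> \<bullet> b\<bar> \<le> Bs" using Basis_le_norm[OF b, of "z \<omega>"] elim by simp
      then have "\<bar>z \<omega> \<bullet> b\<bar> * \<bar>\<eta> j \<omega> \<bullet> b\<bar> \<le> Bs * \<bar>\<eta> j \<omega> \<bullet> b\<bar>" by (intro mult_right_mono) auto
      then show ?case using Bs_nn by (simp add: abs_mult)
    qed
  qed
  have i2: "integrable M (\<lambda>\<omega>. (z \<omega> \<bullet> b) * r b \<omega>)" and e2: "(\<integral>\<omega>. (z \<omega> \<bullet> b) * r b \<omega> \<partial>M) = (\<integral>\<omega>. (z \<omega> \<bullet> b) * (\<eta> j \<omega> \<bullet> b) \<partial>M)"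
    if b: "b \<in> Basis" for b
  proof -
    have ib: "(\<lambda>\<omega>. \<eta> j \<omega> \<bullet> b) \<in> borel_measurable M" by measurable
    show "integrable M (\<lambda>\<omega>. (z \<omega> \<bullet> b) * r b \<omega>)"
      using S.real_cond_exp_intg(1)[OF i1[OF b] zF ib] unfolding r_def .
    show "(\<integral>\<omega>. (z \<omega> \<bullet> b) * r b \<omega> \<partial>M) = (\<integral>\<omega>. (z \<omega> \<bullet> b) * (\<eta> j \<omega> \<bullet> b) \<partial>M)"
      using S.real_cond_exp_intg(2)[OF i1[OF b] zF ib] unfolding r_def .
  qed
  have "(\<integral>\<omega>. z \<omega> \<bullet> \<eta> j \<omega> \<partial>M) = (\<integral>\<omega>. (\<Sum>b\<in>Basis. (z \<omega> \<bullet> b) * (\<eta> j \<omega> \<bullet> b)) \<partial>M)"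
    using euclidean_inner[of "z _" "\<eta> j _"] by presburger
  also have "\<dots> = (\<Sum>b\<in>Basis. (\<integral>\<omega>. (z \<omega> \<bullet> b) * (\<eta> j \<omega> \<bullet> b) \<partial>M))"
    by (rule Bochner_Integration.integral_sum) (rule i1)
  also have "\<dots> = (\<Sum>b\<in>Basis. (\<integral>\<omega>. (z \<omega> \<bullet> b) * r b \<omega> \<partial>M))"
    using e2 by simp
  also have "\<dots> = (\<integral>\<omega>. (\<Sum>b\<in>Basis. (z \<omega> \<bullet> b) * r b \<omega>) \<partial>M)"
    by (rule Bochner_Integration.integral_sum[symmetric]) (rule i2)
  also have "\<dots> = (\<integral>\<omega>. z \<omega> \<bullet> V j \<omega> \<partial>M)"
  proof -
    have "z \<omega> \<bullet> V j \<omega> = (\<Sum>b\<in>Basis. (z \<omega> \<bullet> b) * r b \<omega>)" for \<omega>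
      unfolding V_def vcond_exp_def r_def by (simp add: inner_sum_right mult.commute)
    then show ?thesis by simp
  qed
  also have "\<dots> \<le> (\<integral>\<omega>. Bs * norm (V j \<omega>) \<partial>M)"
  proof (rule integral_mono_AE)
    have "integrable M (\<lambda>\<omega>. (\<Sum>b\<in>Basis. (z \<omega> \<bullet> b) * r b \<omega>))" using i2 by auto
    moreover have "z \<omega> \<bullet> V j \<omega> = (\<Sum>b\<in>Basis. (z \<omega> \<bullet> b) * r b \<omega>)" for \<omega>
      unfolding V_def vcond_exp_def r_def by (simp add: inner_sum_right mult.commute)
    ultimately show "integrable M (\<lambda>\<omega>. z \<omega> \<bullet> V j \<omega>)" by simp
    show "integrable M (\<lambda>\<omega>. Bs * norm (V j \<omega>))" using e1_int by auto
    show "AE \<omega> in M. z \<omega> \<bullet> V j \<omega> \<le> Bs * norm (V j \<omega>)"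
      using zb
    proof eventually_elim
      case (elim \<omega>)
      have "z \<omega> \<bullet> V j \<omega> \<le> norm (z \<omega>) * norm (V j \<omega>)" by (rule norm_cauchy_schwarz)
      also have "\<dots> \<le> Bs * norm (V j \<omega>)" using elim by (intro mult_right_mono) auto
      finally show ?case .
    qed
  qed
  also have "\<dots> = Bs * (\<integral>\<omega>. norm (V j \<omega>) \<partial>M)" by simp
  finally show ?thesis by (simp add: z_def)
qed

lemma e2_eq: "(\<integral>\<^sup>+\<omega>. nn_cond_exp M (Fk j) (\<lambda>\<omega>. ennreal ((norm (\<eta> j \<omega>))\<^sup>2)) \<omega> \<partial>M)
    = (\<integral>\<^sup>+\<omega>. ennreal ((norm (\<eta> j \<omega>))\<^sup>2) \<partial>M)"
proof -
  interpret S: sigma_finite_subalgebra M "Fk j" by (rule fin_sub)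
  show ?thesis using S.nn_cond_exp_intg[of "\<lambda>_. 1" "\<lambda>\<omega>. ennreal ((norm (\<eta> j \<omega>))\<^sup>2)"] by simp
qed

lemma Dd_int: "integrable M (Dd j)"
proof (rule integrable_const_bound)
  show "AE \<omega> in M. norm (Dd j \<omega>) \<le> Bs\<^sup>2" using Dd_bound by eventually_elim (simp add: Dd_def)
qed measurable

lemma Dd_intg: "0 \<le> (\<integral>\<omega>. Dd j \<omega> \<partial>M)" "(\<integral>\<omega>. Dd j \<omega> \<partial>M) \<le> Bs\<^sup>2"
proof -
  show "0 \<le> (\<integral>\<omega>. Dd j \<omega> \<partial>M)" by (rule integral_nonneg_AE) (simp add: Dd_def)
  have "(\<integral>\<omega>. Dd j \<omega> \<partial>M) \<le> (\<integral>\<omega>. Bs\<^sup>2 \<partial>M)"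
    by (rule integral_mono_AE[OF Dd_int _ Dd_bound]) simp
  then show "(\<integral>\<omega>. Dd j \<omega> \<partial>M) \<le> Bs\<^sup>2" by (simp add: prob_space)
qed

end

context mset
begin

lemma f_cont: "continuous_on UNIV f"
  using f_grad by (metis continuous_at_imp_continuous_on has_derivative_continuous)

lemma g_bm: "g \<in> borel_measurable borel"
proof (rule borel_measurableI_le)
  fix y
  have "closed {x. g x \<le> y}" using g_lsc unfolding lsc_def by auto
  then show "{x \<in> space borel. g x \<le> y} \<in> sets borel" by simp
qed

lemma Fr_M[measurable]: "(\<lambda>\<omega>. D.Fr (\<theta> k \<omega>)) \<in> borel_measurable M"
proof -
  have [measurable]: "f \<in> borel_measurable borel" by (rule borel_measurable_continuous_onI[OF f_cont])
  have [measurable]: "g \<in> borel_measurable borel" by (rule g_bm)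
  show ?thesis unfolding D.Fr_def by measurable
qed

lemma step_int:
  assumes fin: "(\<integral>\<^sup>+\<omega>. ennreal ((norm (\<eta> j \<omega>))\<^sup>2) \<partial>M) \<noteq> \<infinity>"
  shows "integrable M (\<lambda>\<omega>. (norm (\<eta> j \<omega>))\<^sup>2)"
    and "integrable M (\<lambda>\<omega>. D.Fr (\<theta> (Suc j) \<omega>))"
    and "(\<integral>\<omega>. D.Fr (\<theta> (Suc j) \<omega>) \<partial>M) \<le> Fs
          + ((\<integral>\<omega>. Dd j \<omega> \<partial>M) - (\<integral>\<omega>. Dd (Suc j) \<omega> \<partial>M)) / (2 * \<gamma> (Suc j))
          + Bs * (\<integral>\<omega>. norm (V j \<omega>) \<partial>M) + \<gamma> (Suc j) * (\<integral>\<omega>. (norm (\<eta> j \<omega>))\<^sup>2 \<partial>M)"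
proof -
  obtain x where x: "(\<integral>\<^sup>+\<omega>. ennreal ((norm (\<eta> j \<omega>))\<^sup>2) \<partial>M) = ennreal x"
    using fin by (cases "(\<integral>\<^sup>+\<omega>. ennreal ((norm (\<eta> j \<omega>))\<^sup>2) \<partial>M)" rule: ennreal_cases) auto
  show Qi: "integrable M (\<lambda>\<omega>. (norm (\<eta> j \<omega>))\<^sup>2)"
    by (rule integrableI_nn_integral_finite[OF _ _ x]) auto
  define R where "R \<omega> = Fs + (Dd j \<omega> - Dd (Suc j) \<omega>) / (2 * \<gamma> (Suc j))
           + (\<theta>s - P j \<omega>) \<bullet> \<eta> j \<omega> + \<gamma> (Suc j) * (norm (\<eta> j \<omega>))\<^sup>2" for \<omega>
  have Ri: "integrable M R"
    unfolding R_def using Qi Dd_int inner_int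
    by (intro Bochner_Integration.integrable_add Bochner_Integration.integrable_diff
        Bochner_Integration.integrable_divide_zero Bochner_Integration.integrable_mult_right
        integrable_const) auto
  have le: "D.Fr (\<theta> (Suc j) \<omega>) \<le> R \<omega>" if "\<omega> \<in> space M" for \<omega>
    using pathwise[OF that] unfolding R_def .
  show Fi: "integrable M (\<lambda>\<omega>. D.Fr (\<theta> (Suc j) \<omega>))"
  proof (rule Bochner_Integration.integrable_bound)
    show "integrable M (\<lambda>\<omega>. \<bar>Fs\<bar> + \<bar>R \<omega>\<bar>)" using Ri by auto
    show "(\<lambda>\<omega>. D.Fr (\<theta> (Suc j) \<omega>)) \<in> borel_measurable M" by measurable
    show "AE \<omega> in M. norm (D.Fr (\<theta> (Suc j) \<omega>)) \<le> norm (\<bar>Fs\<bar> + \<bar>R \<omega>\<bar>)"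
    proof (rule AE_I2)
      fix \<omega> assume "\<omega> \<in> space M"
      then show "norm (D.Fr (\<theta> (Suc j) \<omega>)) \<le> norm (\<bar>Fs\<bar> + \<bar>R \<omega>\<bar>)"
        using le[OF \<open>\<omega> \<in> space M\<close>] Fr_lower[OF \<open>\<omega> \<in> space M\<close>, of j] by simp
    qed
  qed
  have "(\<integral>\<omega>. D.Fr (\<theta> (Suc j) \<omega>) \<partial>M) \<le> (\<integral>\<omega>. R \<omega> \<partial>M)"
    by (rule integral_mono_AE[OF Fi Ri AE_I2[OF le]])
  also have "(\<integral>\<omega>. R \<omega> \<partial>M) = Fs + ((\<integral>\<omega>. Dd j \<omega> \<partial>M) - (\<integral>\<omega>. Dd (Suc j) \<omega> \<partial>M)) / (2 * \<gamma> (Suc j))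
          + (\<integral>\<omega>. (\<theta>s - P j \<omega>) \<bullet> \<eta> j \<omega> \<partial>M) + \<gamma> (Suc j) * (\<integral>\<omega>. (norm (\<eta> j \<omega>))\<^sup>2 \<partial>M)"
    unfolding R_def using Qi Dd_int inner_int by (simp add: prob_space)
  finally show "(\<integral>\<omega>. D.Fr (\<theta> (Suc j) \<omega>) \<partial>M) \<le> Fs
          + ((\<integral>\<omega>. Dd j \<omega> \<partial>M) - (\<integral>\<omega>. Dd (Suc j) \<omega> \<partial>M)) / (2 * \<gamma> (Suc j))
          + Bs * (\<integral>\<omega>. norm (V j \<omega>) \<partial>M) + \<gamma> (Suc j) * (\<integral>\<omega>. (norm (\<eta> j \<omega>))\<^sup>2 \<partial>M)"
    using inner_bound[of j] by linarith
qed

end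

context mset
begin

lemma eta_fold: "(\<lambda>\<omega>. H (Suc j) \<omega> - gradf (\<theta> j \<omega>)) = \<eta> j"
  by (simp add: fun_eq_iff \<eta>_def)

lemma final:
  fixes n :: nat
  assumes a_nonneg: "\<forall>k\<ge>1. 0 \<le> a k"
    and a_over_\<gamma>_mono: "\<forall>k\<ge>1. a k / \<gamma> k \<le> a (Suc k) / \<gamma> (Suc k)"
    and n_ge: "1 \<le> n"
    and A_pos: "0 < (\<Sum>k=1..n. a k)"
  shows
    "(let A = (\<Sum>k=1..n. a k);
          Bs = B + norm \<theta>s;
          \<F> = nat_filtration M (\<theta> 0) H;
          \<eta> = (\<lambda>k \<omega>. H (Suc k) \<omega> - gradf (\<theta> k \<omega>));
          \<epsilon>1 = (\<lambda>k \<omega>. norm (vcond_exp M (\<F> k) (\<eta> k) \<omega>));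
          \<epsilon>2 = (\<lambda>k. nn_cond_exp M (\<F> k) (\<lambda>\<omega>. ennreal ((norm (\<eta> k \<omega>))\<^sup>2)))
      in ereal (1 / A) * (\<Sum>k=1..n. ereal (a k) *
             ereal_expectation M (\<lambda>\<omega>. ereal (f (\<theta> k \<omega>)) + g (\<theta> k \<omega>)))
           - (ereal (f \<theta>s) + g \<theta>s)
         \<le> ereal (Bs\<^sup>2 * a n / (2 * \<gamma> n * A))
           + ereal (1 / A) * (\<Sum>k=1..n. ereal (a k) *
               (ereal Bs * enn2ereal (\<integral>\<^sup>+\<omega>. ennreal (\<epsilon>1 (k - 1) \<omega>) \<partial>M)
                + ereal (\<gamma> k) * enn2ereal (\<integral>\<^sup>+\<omega>. \<epsilon>2 (k - 1) \<omega> \<partial>M))))"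
proof -
  define A where "A = (\<Sum>k=1..n. a k)"
  define U where "U k = ereal (a k) * ereal_expectation M (\<lambda>\<omega>. ereal (f (\<theta> k \<omega>)) + g (\<theta> k \<omega>))" for k
  define X1 where "X1 k = enn2ereal (\<integral>\<^sup>+\<omega>. ennreal (norm (V (k - 1) \<omega>)) \<partial>M)" for k
  define X2 where "X2 k = enn2ereal (\<integral>\<^sup>+\<omega>. ennreal ((norm (\<eta> (k - 1) \<omega>))\<^sup>2) \<partial>M)" for k
  define T where "T k = ereal (a k) * (ereal Bs * X1 k + ereal (\<gamma> k) * X2 k)" for k
  have Fs_e: "ereal (f \<theta>s) + g \<theta>s = ereal Fs"
    using gs_fin unfolding Fs_def D.Fr_def by (metis plus_ereal.simps(1))
  have goal: "ereal (1 / A) * (\<Sum>k=1..n. U k) - ereal Fs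
      \<le> ereal (Bs\<^sup>2 * a n / (2 * \<gamma> n * A)) + ereal (1 / A) * (\<Sum>k=1..n. T k)"
  proof (cases "\<exists>k\<in>{1..n}. 0 < a k \<and> X2 k = \<infinity>")
    case True
    then obtain k0 where k0: "k0 \<in> {1..n}" "0 < a k0" "X2 k0 = \<infinity>" by blast
    have X1nn: "0 \<le> X1 k" for k unfolding X1_def by simp
    have "0 \<le> ereal Bs * X1 k0" using Bs_nn X1nn[of k0] by simp
    then have "ereal Bs * X1 k0 \<noteq> - \<infinity>" by auto
    moreover have "ereal (\<gamma> k0) * X2 k0 = \<infinity>" using k0 \<gamma>_pos by auto
    ultimately have "T k0 = \<infinity>" unfolding T_def using k0(2) by simp
    then have "(\<Sum>k=1..n. T k) = \<infinity>" using k0(1) unfolding sum_Pinfty by auto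
    moreover have "0 < 1 / A" using A_pos A_def by simp
    ultimately have "ereal (Bs\<^sup>2 * a n / (2 * \<gamma> n * A)) + ereal (1 / A) * (\<Sum>k=1..n. T k) = \<infinity>"
      by simp
    then show ?thesis by (metis ereal_less_eq(1))
  next
    case False
    then have fin: "0 < a k \<Longrightarrow> X2 k \<noteq> \<infinity>" if "k \<in> {1..n}" for k using that by blast
    define I where "I k = (if 0 < a k then (\<integral>\<omega>. D.Fr (\<theta> k \<omega>) \<partial>M) else 0)" for k
    define e1 where "e1 k = (\<integral>\<omega>. norm (V (k - 1) \<omega>) \<partial>M)" for k
    define e2 where "e2 k = (if 0 < a k then (\<integral>\<omega>. (norm (\<eta> (k - 1) \<omega>))\<^sup>2 \<partial>M) else 0)" for k
    define d where "d j = (\<integral>\<omega>. Dd j \<omega> \<partial>M)" for j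
    have an: "0 \<le> a k" if "k \<in> {1..n}" for k using a_nonneg that by auto
    have gk: "0 < \<gamma> k" if "k \<in> {1..n}" for k using \<gamma>_pos that by auto
    have fin': "(\<integral>\<^sup>+\<omega>. ennreal ((norm (\<eta> (k - 1) \<omega>))\<^sup>2) \<partial>M) \<noteq> \<infinity>"
      if "k \<in> {1..n}" "0 < a k" for k
      using fin[OF that] unfolding X2_def by auto
    have X1e: "X1 k = ereal (e1 k)" for k
    proof -
      have "(\<integral>\<^sup>+\<omega>. ennreal (norm (V (k - 1) \<omega>)) \<partial>M) = ennreal (e1 k)"
        unfolding e1_def by (rule nn_integral_eq_integral[OF e1_int]) simp
      moreover have "0 \<le> e1 k" unfolding e1_def by simp
      ultimately show ?thesis unfolding X1_def by simp
    qed
    have Ueq: "U k = ereal (a k * I k)" if k: "k \<in> {1..n}" for k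
    proof (cases "0 < a k")
      case True
      obtain j where j: "k = Suc j" using k by (cases k) auto
      have "integrable M (\<lambda>\<omega>. D.Fr (\<theta> (Suc j) \<omega>))"
        using step_int(2)[of j] fin'[OF k True] j by simp
      then have "ereal_expectation M (\<lambda>\<omega>. ereal (f (\<theta> k \<omega>)) + g (\<theta> k \<omega>)) = ereal (\<integral>\<omega>. D.Fr (\<theta> k \<omega>) \<partial>M)"
        unfolding j by (rule ereal_exp_integrable) (rule Fr_eq)
      then show ?thesis unfolding U_def I_def using True by simp
    next
      case False
      then have "a k = 0" using an[OF k] by simp
      then show ?thesis unfolding U_def I_def by (simp add: zero_ereal_def[symmetric])
    qed
    have Teq: "T k = ereal (a k * (Bs * e1 k + \<gamma> k * e2 k))" if k: "k \<in> {1..n}" for k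
    proof (cases "0 < a k")
      case True
      have Qi: "integrable M (\<lambda>\<omega>. (norm (\<eta> (k - 1) \<omega>))\<^sup>2)"
        using step_int(1)[OF fin'[OF k True]] .
      have "(\<integral>\<^sup>+\<omega>. ennreal ((norm (\<eta> (k - 1) \<omega>))\<^sup>2) \<partial>M) = ennreal (e2 k)"
      proof -
        have "(\<integral>\<^sup>+\<omega>. ennreal ((norm (\<eta> (k - 1) \<omega>))\<^sup>2) \<partial>M) = ennreal (\<integral>\<omega>. (norm (\<eta> (k - 1) \<omega>))\<^sup>2 \<partial>M)"
          by (rule nn_integral_eq_integral[OF Qi]) simp
        then show ?thesis unfolding e2_def using True by simp
      qed
      moreover have "0 \<le> e2 k" unfolding e2_def by simp
      ultimately have "X2 k = ereal (e2 k)" unfolding X2_def by simp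
      then show ?thesis unfolding T_def X1e by simp
    next
      case False
      then have "a k = 0" using an[OF k] by simp
      then show ?thesis unfolding T_def by (simp add: zero_ereal_def[symmetric])
    qed
    have SU: "(\<Sum>k=1..n. U k) = ereal (\<Sum>k=1..n. a k * I k)"
      using Ueq by (simp add: sum_ereal[symmetric] del: sum_ereal)
    have ST: "(\<Sum>k=1..n. T k) = ereal (\<Sum>k=1..n. a k * (Bs * e1 k + \<gamma> k * e2 k))"
      using Teq by (simp add: sum_ereal[symmetric] del: sum_ereal)
    define c where "c k = a k / (2 * \<gamma> k)" for k
    have perk: "a k * I k \<le> a k * Fs + c k * (d (k - 1) - d k) + a k * (Bs * e1 k + \<gamma> k * e2 k)"
      if k: "k \<in> {1..n}" for k
    proof (cases "0 < a k")
      case True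
      obtain j where j: "k = Suc j" using k by (cases k) auto
      have "I k \<le> Fs + (d (k - 1) - d k) / (2 * \<gamma> k) + Bs * e1 k + \<gamma> k * e2 k"
        using step_int(3)[of j] fin'[OF k True] True unfolding I_def e1_def e2_def d_def j by simp
      then have "a k * I k \<le> a k * (Fs + (d (k - 1) - d k) / (2 * \<gamma> k) + Bs * e1 k + \<gamma> k * e2 k)"
        using True by (intro mult_left_mono) auto
      then show ?thesis unfolding c_def by (simp add: algebra_simps)
    next
      case False
      then have "a k = 0" using an[OF k] by simp
      then show ?thesis unfolding c_def by simp
    qed
    have tel: "(\<Sum>k=1..n. c k * (d (k - 1) - d k)) \<le> c n * (Bs\<^sup>2 - d n)"
    proof (rule telescope[OF n_ge])
      show "0 \<le> c k" if "1 \<le> k" for k using a_nonneg \<gamma>_pos that unfolding c_def by auto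
      show "c k \<le> c (Suc k)" if "1 \<le> k" for k
      proof -
        have "a k / \<gamma> k \<le> a (Suc k) / \<gamma> (Suc k)" using a_over_\<gamma>_mono that by auto
        then have "(a k / \<gamma> k) / 2 \<le> (a (Suc k) / \<gamma> (Suc k)) / 2" by simp
        then show ?thesis unfolding c_def by (simp add: mult.commute)
      qed
      show "0 \<le> d k" for k unfolding d_def by (rule Dd_intg)
      show "d k \<le> Bs\<^sup>2" for k unfolding d_def by (rule Dd_intg)
    qed
    have "c n * (Bs\<^sup>2 - d n) \<le> c n * Bs\<^sup>2"
      using a_nonneg \<gamma>_pos n_ge Dd_intg[of n] unfolding c_def d_def by (intro mult_left_mono) auto
    with tel have tel': "(\<Sum>k=1..n. c k * (d (k - 1) - d k)) \<le> c n * Bs\<^sup>2" by linarith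
    have "(\<Sum>k=1..n. a k * I k) \<le> (\<Sum>k=1..n. a k * Fs + c k * (d (k - 1) - d k) + a k * (Bs * e1 k + \<gamma> k * e2 k))"
      by (rule sum_mono) (rule perk)
    also have "\<dots> = A * Fs + (\<Sum>k=1..n. c k * (d (k - 1) - d k)) + (\<Sum>k=1..n. a k * (Bs * e1 k + \<gamma> k * e2 k))"
      by (simp add: sum.distrib A_def sum_distrib_right)
    finally have main: "(\<Sum>k=1..n. a k * I k) \<le> A * Fs + c n * Bs\<^sup>2 + (\<Sum>k=1..n. a k * (Bs * e1 k + \<gamma> k * e2 k))"
      using tel' by linarith
    have Ap: "0 < A" using A_pos A_def by simp
    have "(\<Sum>k=1..n. a k * I k) / A \<le> (A * Fs + c n * Bs\<^sup>2 + (\<Sum>k=1..n. a k * (Bs * e1 k + \<gamma> k * e2 k))) / A"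
      using main Ap by (intro divide_right_mono) auto
    also have "\<dots> = Fs + Bs\<^sup>2 * a n / (2 * \<gamma> n * A) + (\<Sum>k=1..n. a k * (Bs * e1 k + \<gamma> k * e2 k)) / A"
      using Ap \<gamma>_pos n_ge unfolding c_def by (simp add: field_simps)
    finally have real_goal: "1 / A * (\<Sum>k=1..n. a k * I k) - Fs \<le> Bs\<^sup>2 * a n / (2 * \<gamma> n * A) + 1 / A * (\<Sum>k=1..n. a k * (Bs * e1 k + \<gamma> k * e2 k))"
      by simp
    show ?thesis unfolding SU ST using real_goal by simp
  qed
  have "(\<Sum>k=1..n. ereal (a k) *
               (ereal Bs * enn2ereal (\<integral>\<^sup>+\<omega>. ennreal (norm (vcond_exp M (Fk (k - 1)) (\<eta> (k - 1)) \<omega>)) \<partial>M)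
                + ereal (\<gamma> k) * enn2ereal (\<integral>\<^sup>+\<omega>. nn_cond_exp M (Fk (k - 1)) (\<lambda>\<omega>. ennreal ((norm (\<eta> (k - 1) \<omega>))\<^sup>2)) \<omega> \<partial>M)))
      = (\<Sum>k=1..n. T k)"
    unfolding T_def X1_def X2_def V_def e2_eq ..
  then show ?thesis using goal unfolding Let_def eta_fold
    by (simp add: A_def U_def[symmetric] Bs_def[symmetric] Fs_e)
qed

end

theorem corollary7:
  fixes f :: "'a::euclidean_space \<Rightarrow> real" and g :: "'a \<Rightarrow> ereal"
    and gradf :: "'a \<Rightarrow> 'a" and L :: real
    and M :: "'b measure"
    and \<gamma> a :: "nat \<Rightarrow> real"
    and \<theta> H :: "nat \<Rightarrow> 'b \<Rightarrow> 'a"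
    and B :: real and \<theta>s :: 'a and n :: nat
  assumes prob: "prob_space M"
    \<comment> \<open>(H1)\<close>
    and g_proper: "\<exists>x. g x \<noteq> \<infinity>" and g_not_minf: "\<forall>x. g x \<noteq> -\<infinity>"
    and g_convex: "ereal_convex g" and g_lsc: "lsc g"
    and f_grad: "\<forall>x. (f has_derivative (\<lambda>h. gradf x \<bullet> h)) (at x)"
    and gradf_cont: "continuous_on UNIV gradf"
    and L_pos: "0 < L"
    and gradf_lip: "\<forall>x y. norm (gradf x - gradf y) \<le> L * norm (x - y)"
    \<comment> \<open>(H2)\<close>
    and f_convex: "convex_on UNIV f"
    and argmin_ne: "\<exists>x. \<forall>y. ereal (f x) + g x \<le> ereal (f y) + g y"
    \<comment> \<open>stepsizes\<close>
    and \<gamma>_pos: "\<forall>k\<ge>1. 0 < \<gamma> k \<and> \<gamma> k \<le> 1 / L"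
    and \<gamma>_noninc: "\<forall>k\<ge>1. \<gamma> (Suc k) \<le> \<gamma> k"
    \<comment> \<open>random iterates\<close>
    and \<theta>0_meas: "\<theta> 0 \<in> borel_measurable M"
    and \<theta>0_dom: "\<forall>\<omega>\<in>space M. \<theta> 0 \<omega> \<in> Dom g"
    and H_meas: "\<forall>k\<ge>1. H k \<in> borel_measurable M"
    and H_int: "\<forall>k\<ge>1. integrable M (H k)"
    and iter: "\<forall>k. \<forall>\<omega>\<in>space M. \<theta> (Suc k) \<omega> \<in> Prox g (\<gamma> (Suc k)) (\<theta> k \<omega> - \<gamma> (Suc k) *\<^sub>R H (Suc k) \<omega>)"
    \<comment> \<open>weights\<close>
    and a_nonneg: "\<forall>k\<ge>1. 0 \<le> a k"
    and a_over_\<gamma>_mono: "\<forall>k\<ge>1. a k / \<gamma> k \<le> a (Suc k) / \<gamma> (Suc k)"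
    \<comment> \<open>boundedness\<close>
    and bounded: "AE \<omega> in M. \<forall>k. norm (\<theta> k \<omega>) \<le> B"
    \<comment> \<open>minimizer and index\<close>
    and \<theta>s_min: "\<forall>y. ereal (f \<theta>s) + g \<theta>s \<le> ereal (f y) + g y"
    and n_ge: "1 \<le> n"
    and A_pos: "0 < (\<Sum>k=1..n. a k)"
  shows
    "(let A = (\<Sum>k=1..n. a k);
          Bs = B + norm \<theta>s;
          \<F> = nat_filtration M (\<theta> 0) H;
          \<eta> = (\<lambda>k \<omega>. H (Suc k) \<omega> - gradf (\<theta> k \<omega>));
          \<epsilon>1 = (\<lambda>k \<omega>. norm (vcond_exp M (\<F> k) (\<eta> k) \<omega>));
          \<epsilon>2 = (\<lambda>k. nn_cond_exp M (\<F> k) (\<lambda>\<omega>. ennreal ((norm (\<eta> k \<omega>))\<^sup>2)))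
      in ereal (1 / A) * (\<Sum>k=1..n. ereal (a k) *
             ereal_expectation M (\<lambda>\<omega>. ereal (f (\<theta> k \<omega>)) + g (\<theta> k \<omega>)))
           - (ereal (f \<theta>s) + g \<theta>s)
         \<le> ereal (Bs\<^sup>2 * a n / (2 * \<gamma> n * A))
           + ereal (1 / A) * (\<Sum>k=1..n. ereal (a k) *
               (ereal Bs * enn2ereal (\<integral>\<^sup>+\<omega>. ennreal (\<epsilon>1 (k - 1) \<omega>) \<partial>M)
                + ereal (\<gamma> k) * enn2ereal (\<integral>\<^sup>+\<omega>. \<epsilon>2 (k - 1) \<omega> \<partial>M))))"
proof -
  interpret mset f g gradf L M \<gamma> a \<theta> H B \<theta>s
    using prob g_proper g_not_minf g_convex g_lsc f_grad gradf_cont L_pos gradf_lip f_convex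
      \<gamma>_pos \<theta>0_meas H_meas H_int iter bounded \<theta>s_min
    unfolding mset_def by blast
  show ?thesis by (rule final[OF a_nonneg a_over_\<gamma>_mono n_ge A_pos])
qed

end
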